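(* Let $X$ be a real Hilbert space, $A,B\colon X\rightrightarrows X$ maximally monotone, $T:=\operatorname{Id}-J_A+J_BR_A$, $D:=\operatorname{dom}A-\operatorname{dom}B$, $R:=\operatorname{ran}A+\operatorname{ran}B$, $v_D:=P_{\overline D}(0)$, $v_R:=P_{\overline R}(0)$, and assume $\overline{\operatorname{ran}}(\operatorname{Id}-T)=\overline{D\cap R}=\overline D\cap\overline R$. Let $x\in X$. Then (i) $(J_AT^nx)_{n\in\mathbb N}$ is asymptotically regular if and only if $v_R=0$; (ii) $(J_{A^{-1}}T^nx)_{n\in\mathbb N}$ is asymptotically regular if and only if $v_D=0$.
   Context: $J_C:=(\operatorname{Id}+C)^{-1}$, $R_C:=2J_C-\operatorname{Id}$; $P_S$ is the projection onto a nonempty closed convex set. A sequence $(y_n)$ is asymptotically regular if $y_n-y_{n+1}\to0$. *)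

theory Defs
  imports "HOL-Analysis.Analysis"
begin

text \<open>Set-valued operators X \<rightrightarrows> X are modelled as functions 'a \<Rightarrow> 'a set.
 A real Hilbert space is a type of class real_inner and complete_space.\<close>

definition mono_op :: "('a::real_inner \<Rightarrow> 'a set) \<Rightarrow> bool" where
  "mono_op A \<longleftrightarrow> (\<forall>x y u v. u \<in> A x \<longrightarrow> v \<in> A y \<longrightarrow> 0 \<le> inner (x - y) (u - v))"

definition max_mono_op :: "('a::real_inner \<Rightarrow> 'a set) \<Rightarrow> bool" where
  "max_mono_op A \<longleftrightarrow> mono_op A \<and>
     (\<forall>B. mono_op B \<and> (\<forall>x. A x \<subseteq> B x) \<longrightarrow> B = A)"

definition dom_op :: "('a \<Rightarrow> 'b set) \<Rightarrow> 'a set" where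
  "dom_op A = {x. A x \<noteq> {}}"

definition ran_op :: "('a \<Rightarrow> 'b set) \<Rightarrow> 'b set" where
  "ran_op A = (\<Union>x. A x)"

definition inv_op :: "('a \<Rightarrow> 'b set) \<Rightarrow> 'b \<Rightarrow> 'a set" where
  "inv_op A = (\<lambda>u. {x. u \<in> A x})"

text \<open>Resolvent J_A = (Id + A)^{-1}: J_A x is the (unique, for monotone A) y with x \<in> y + A y.\<close>
definition resolvent :: "('a::real_vector \<Rightarrow> 'a set) \<Rightarrow> 'a \<Rightarrow> 'a" where
  "resolvent A x = (THE y. x - y \<in> A y)"

definition reflected_resolvent :: "('a::real_vector \<Rightarrow> 'a set) \<Rightarrow> 'a \<Rightarrow> 'a" where
  "reflected_resolvent A x = 2 *\<^sub>R resolvent A x - x"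

definition DR_op :: "('a::real_vector \<Rightarrow> 'a set) \<Rightarrow> ('a \<Rightarrow> 'a set) \<Rightarrow> 'a \<Rightarrow> 'a" where
  "DR_op A B x = x - resolvent A x + resolvent B (reflected_resolvent A x)"

text \<open>Projection onto a set (closest point); well defined for nonempty closed convex sets.\<close>
definition proj :: "'a::metric_space set \<Rightarrow> 'a \<Rightarrow> 'a" where
  "proj S x = (SOME p. p \<in> S \<and> (\<forall>y\<in>S. dist x p \<le> dist x y))"

definition asymp_regular :: "(nat \<Rightarrow> 'a::real_normed_vector) \<Rightarrow> bool" where
  "asymp_regular y \<longleftrightarrow> (\<lambda>n. y n - y (Suc n)) \<longlonglongrightarrow> 0"

end

theory Submission
  imports Defs
begin


lemma continuous_on_Max_fin:
  fixes f :: "'i \<Rightarrow> 'a::topological_space \<Rightarrow> real"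
  assumes "finite I" "I \<noteq> {}" "\<forall>i\<in>I. continuous_on S (f i)"
  shows "continuous_on S (\<lambda>y. Max ((\<lambda>i. f i y) ` I))"
  using assms
proof (induction I rule: finite_ne_induct)
  case (singleton x)
  then show ?case by simp
next
  case (insert x F)
  have "(\<lambda>y. Max ((\<lambda>i. f i y) ` insert x F)) = (\<lambda>y. max (f x y) (Max ((\<lambda>i. f i y) ` F)))"
    using insert by (auto simp: Max_insert)
  then show ?case using insert by (auto intro!: continuous_on_max)
qed

lemma double_sum_identity:
  fixes x :: "'b \<Rightarrow> 'a::real_inner"
  assumes "finite S" "sum u S = 1"
  shows "(\<Sum>s\<in>S. \<Sum>s'\<in>S. u s * u s' * (norm (x s - x s'))\<^sup>2)
       = 2 * (\<Sum>s\<in>S. u s * (norm (x s - c))\<^sup>2) - 2 * (norm ((\<Sum>s\<in>S. u s *\<^sub>R x s) - c))\<^sup>2"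
proof -
  define y where "y s = x s - c" for s
  have xy: "x s - x s' = y s - y s'" for s s' by (simp add: y_def)
  have m: "(\<Sum>s\<in>S. u s *\<^sub>R x s) - c = (\<Sum>s\<in>S. u s *\<^sub>R y s)"
    using assms by (simp add: y_def scaleR_diff_right sum_subtractf flip: scaleR_left.sum)
  define a where "a s = inner (y s) (y s)" for s
  have e1: "(norm (y s - y s'))\<^sup>2 = a s + a s' - 2 * inner (y s) (y s')" for s s'
    unfolding power2_norm_eq_inner a_def by (simp add: inner_diff_left inner_diff_right inner_commute)
  have T1: "(\<Sum>s'\<in>S. u s * u s' * a s) = u s * a s" for s
  proof -
    have "(\<Sum>s'\<in>S. u s * u s' * a s) = (u s * a s) * (\<Sum>s'\<in>S. u s')"
      by (simp add: sum_distrib_left mult_ac)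
    thus ?thesis using assms(2) by simp
  qed
  have T2: "(\<Sum>s'\<in>S. u s * u s' * a s') = u s * (\<Sum>s'\<in>S. u s' * a s')" for s
    by (simp add: sum_distrib_left mult_ac)
  have T3: "inner (\<Sum>s\<in>S. u s *\<^sub>R y s) (\<Sum>s\<in>S. u s *\<^sub>R y s) = (\<Sum>s\<in>S. \<Sum>s'\<in>S. u s * u s' * inner (y s) (y s'))"
    by (simp add: inner_sum_left inner_sum_right sum_distrib_left mult.assoc)
      (intro sum.cong refl, simp add: inner_commute)
  have "(\<Sum>s\<in>S. \<Sum>s'\<in>S. u s * u s' * (norm (x s - x s'))\<^sup>2)
      = (\<Sum>s\<in>S. (\<Sum>s'\<in>S. u s * u s' * a s) + (\<Sum>s'\<in>S. u s * u s' * a s') - 2 * (\<Sum>s'\<in>S. u s * u s' * inner (y s) (y s')))"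
    unfolding xy e1 by (simp add: algebra_simps sum.distrib sum_subtractf sum_distrib_left)
  also have "\<dots> = (\<Sum>s\<in>S. u s * a s) + (\<Sum>s\<in>S. u s * (\<Sum>s'\<in>S. u s' * a s')) - 2 * (\<Sum>s\<in>S. \<Sum>s'\<in>S. u s * u s' * inner (y s) (y s'))"
    unfolding T1 T2 by (simp add: sum.distrib sum_subtractf sum_distrib_left)
  also have "(\<Sum>s\<in>S. u s * (\<Sum>s'\<in>S. u s' * a s')) = (\<Sum>s'\<in>S. u s' * a s')"
    using assms(2) by (simp add: sum_distrib_right[symmetric])
  finally show ?thesis unfolding m T3[symmetric] by (simp add: power2_norm_eq_inner a_def y_def)
qed

lemma nearest_convex_vi:
  fixes C :: "'a::real_inner set"
  assumes "convex C" "P \<in> C" "\<forall>c\<in>C. norm (y - P) \<le> norm (y - c)" "c \<in> C"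
  shows "inner (y - P) (c - P) \<le> 0"
proof (rule ccontr)
  assume "\<not> ?thesis"
  hence k: "inner (y - P) (c - P) > 0" by simp
  define k where "k = inner (y - P) (c - P)"
  define s where "s = min 1 (k / ((norm (c - P))\<^sup>2 + 1))"
  have kpos: "k > 0" using k by (simp add: k_def)
  have dpos: "(norm (c - P))\<^sup>2 + 1 > 0" by (simp add: add_nonneg_pos)
  have spos: "s > 0" and s1: "s \<le> 1" using kpos dpos by (auto simp: s_def)
  have "P + s *\<^sub>R (c - P) = (1 - s) *\<^sub>R P + s *\<^sub>R c" by (simp add: algebra_simps)
  also have "\<dots> \<in> C" using assms(1,2,4) spos s1 by (simp add: convexD)
  finally have "norm (y - P) \<le> norm (y - (P + s *\<^sub>R (c - P)))" using assms(3) by blast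
  hence "(norm (y - P))\<^sup>2 \<le> (norm ((y - P) - s *\<^sub>R (c - P)))\<^sup>2"
    by (simp add: algebra_simps power_mono)
  also have "\<dots> = (norm (y - P))\<^sup>2 - 2 * s * k + s\<^sup>2 * (norm (c - P))\<^sup>2"
  proof -
    have "(norm ((y - P) - s *\<^sub>R (c - P)))\<^sup>2 = inner ((y - P) - s *\<^sub>R (c - P)) ((y - P) - s *\<^sub>R (c - P))"
      by (simp add: power2_norm_eq_inner)
    also have "\<dots> = inner (y - P) (y - P) - 2 * s * inner (y - P) (c - P) + (s * s) * inner (c - P) (c - P)"
      by (simp add: inner_diff_left inner_diff_right inner_commute algebra_simps)
    finally show ?thesis by (simp only: power2_norm_eq_inner k_def) (simp add: power2_eq_square)
  qed
  finally have "2 * s * k \<le> s\<^sup>2 * (norm (c - P))\<^sup>2" by simp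
  hence "2 * k \<le> s * (norm (c - P))\<^sup>2" using spos by (simp add: power2_eq_square mult.assoc)
  moreover have "s * (norm (c - P))\<^sup>2 \<le> k / ((norm (c - P))\<^sup>2 + 1) * (norm (c - P))\<^sup>2"
    by (rule mult_right_mono) (auto simp: s_def)
  moreover have "k / ((norm (c - P))\<^sup>2 + 1) * (norm (c - P))\<^sup>2 \<le> k"
  proof -
    have "k / ((norm (c - P))\<^sup>2 + 1) * (norm (c - P))\<^sup>2 = k * ((norm (c - P))\<^sup>2 / ((norm (c - P))\<^sup>2 + 1))" by simp
    also have "\<dots> \<le> k * 1" using kpos dpos by (intro mult_left_mono) auto
    finally show ?thesis by simp
  qed
  ultimately show False using kpos by linarith
qed

lemma kirszbraun_finite:
  fixes q p :: "'i \<Rightarrow> 'a::real_inner" and z :: 'a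
  assumes fin: "finite I"
    and ne: "\<And>i j. i \<in> I \<Longrightarrow> j \<in> I \<Longrightarrow> norm (q i - q j) \<le> norm (p i - p j)"
  shows "\<exists>y. \<forall>i\<in>I. norm (y - q i) \<le> norm (z - p i)"
proof (cases "I = {}")
  case True
  thus ?thesis by auto
next
  case False
  define v where "v i y = (norm (y - q i))\<^sup>2 - (norm (z - p i))\<^sup>2" for i y
  define \<Phi> where "\<Phi> y = Max ((\<lambda>i. v i y) ` I)" for y
  define H where "H = convex hull (q ` I)"
  have cH: "compact H" using fin by (simp add: H_def finite_imp_compact_convex_hull)
  have neH: "H \<noteq> {}" using False by (simp add: H_def)
  have convH: "convex H" by (simp add: H_def)
  have "continuous_on H \<Phi>" unfolding \<Phi>_def
    by (rule continuous_on_Max_fin[OF fin False]) (auto simp: v_def intro!: continuous_intros)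
  then obtain y0 where y0H: "y0 \<in> H" and y0min: "\<forall>y\<in>H. \<Phi> y0 \<le> \<Phi> y"
    using continuous_attains_inf[OF cH neH] by blast
  define t where "t = \<Phi> y0"
  have vle: "v i y0 \<le> t" if "i \<in> I" for i using that fin by (simp add: t_def \<Phi>_def)
  show ?thesis
  proof (cases "t \<le> 0")
    case True
    have "norm (y0 - q i) \<le> norm (z - p i)" if "i \<in> I" for i
    proof -
      have "(norm (y0 - q i))\<^sup>2 \<le> (norm (z - p i))\<^sup>2" using vle[OF that] True unfolding v_def by linarith
      thus ?thesis using power2_le_imp_le norm_ge_zero by blast
    qed
    thus ?thesis by blast
  next
    case False
    hence tpos: "t > 0" by simp
    define J where "J = {i\<in>I. v i y0 = t}"
    have "t \<in> (\<lambda>i. v i y0) ` I" unfolding t_def \<Phi>_def using fin \<open>I \<noteq> {}\<close> by (intro Max_in) auto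
    hence neJ: "J \<noteq> {}" by (auto simp: J_def)
    have finJ: "finite J" using fin by (simp add: J_def)
    have JI: "J \<subseteq> I" by (auto simp: J_def)
    define C where "C = convex hull (q ` J)"
    have CH: "C \<subseteq> H" unfolding C_def H_def using JI by (intro hull_mono) auto
    have cC: "compact C" using finJ by (simp add: C_def finite_imp_compact_convex_hull)
    have neC: "C \<noteq> {}" using neJ by (simp add: C_def)
    have "continuous_on C (\<lambda>c. norm (y0 - c))" by (intro continuous_intros)
    then obtain P where PC: "P \<in> C" and Pmin: "\<forall>c\<in>C. norm (y0 - P) \<le> norm (y0 - c)"
      using continuous_attains_inf[OF cC neC] by blast
    have vi: "inner (y0 - P) (q i - P) \<le> 0" if "i \<in> J" for i
      by (rule nearest_convex_vi[OF _ PC Pmin]) (auto simp: C_def that hull_inc)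
    have "y0 = P"
    proof (rule ccontr)
      assume "y0 \<noteq> P"
      define e where "e = P - y0"
      have epos: "norm e > 0" using \<open>y0 \<noteq> P\<close> by (simp add: e_def)
      define ys where "ys s = y0 + s *\<^sub>R e" for s
      have ysH: "ys s \<in> H" if "0 \<le> s" "s \<le> 1" for s
      proof -
        have "ys s = (1 - s) *\<^sub>R y0 + s *\<^sub>R P" by (simp add: ys_def e_def algebra_simps)
        also have "\<dots> \<in> H" using convH y0H CH PC that by (intro convexD) auto
        finally show ?thesis .
      qed
      have expand: "(norm (ys s - q i))\<^sup>2 = (norm (y0 - q i))\<^sup>2 + 2 * s * inner (y0 - q i) e + s\<^sup>2 * (norm e)\<^sup>2" for s i
      proof -
        have "ys s - q i = (y0 - q i) + s *\<^sub>R e" by (simp add: ys_def)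
        thus ?thesis unfolding power2_norm_eq_inner
          by (simp add: inner_add_left inner_add_right inner_commute algebra_simps power2_eq_square)
      qed
      have inJ: "inner (y0 - q i) e \<le> - (norm e)\<^sup>2" if "i \<in> J" for i
      proof -
        have "inner (y0 - q i) e = - (norm e)\<^sup>2 + inner (y0 - P) (q i - P)"
          by (simp add: e_def power2_norm_eq_inner inner_diff_left inner_diff_right inner_commute algebra_simps)
        thus ?thesis using vi[OF that] by simp
      qed
      define gap where "gap i = t - v i y0" for i
      define K where "K i = 2 * \<bar>inner (y0 - q i) e\<bar> + (norm e)\<^sup>2" for i
      have Kpos: "K i \<ge> 0" for i by (simp add: K_def)
      define s0 where "s0 = Min (insert 1 ((\<lambda>i. gap i / (K i + 1)) ` (I - J)))"
      have gpos: "gap i > 0" if "i \<in> I - J" for i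
        using that vle[of i] by (auto simp: gap_def J_def)
      have s0pos: "s0 > 0" unfolding s0_def using fin gpos Kpos
        by (subst Min_gr_iff) (auto intro!: divide_pos_pos add_nonneg_pos)
      have s01: "s0 \<le> 1" unfolding s0_def using fin by (intro Min_le) auto
      have s0g: "s0 \<le> gap i / (K i + 1)" if "i \<in> I - J" for i unfolding s0_def using fin that by (intro Min_le) auto
      define s where "s = s0 / 2"
      have spos: "s > 0" and s1: "s \<le> 1" using s0pos s01 by (auto simp: s_def)
      have lt: "v i (ys s) < t" if "i \<in> I" for i
      proof (cases "i \<in> J")
        case True
        have "v i (ys s) = v i y0 + 2 * s * inner (y0 - q i) e + s\<^sup>2 * (norm e)\<^sup>2"
          by (simp add: v_def expand)
        also have "\<dots> \<le> t - 2 * s * (norm e)\<^sup>2 + s\<^sup>2 * (norm e)\<^sup>2"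
          using mult_left_mono[OF inJ[OF True], of "2 * s"] spos True by (simp add: J_def)
        also have "\<dots> < t"
        proof -
          have ss0: "s\<^sup>2 \<le> s" using mult_left_mono[OF s1, of s] spos by (simp add: power2_eq_square)
          have ss: "s\<^sup>2 < 2 * s" using ss0 spos by linarith
          have "s\<^sup>2 * (norm e)\<^sup>2 < 2 * s * (norm e)\<^sup>2"
            using epos by (intro mult_strict_right_mono[OF ss]) auto
          thus ?thesis by simp
        qed
        finally show ?thesis .
      next
        case False
        hence iIJ: "i \<in> I - J" using that by simp
        have "v i (ys s) = v i y0 + 2 * s * inner (y0 - q i) e + s\<^sup>2 * (norm e)\<^sup>2"
          by (simp add: v_def expand)
        also have "\<dots> \<le> v i y0 + s * K i"
        proof -
          have "2 * s * inner (y0 - q i) e \<le> s * (2 * \<bar>inner (y0 - q i) e\<bar>)" using spos by simp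
          moreover have "s\<^sup>2 * (norm e)\<^sup>2 \<le> s * (norm e)\<^sup>2"
          proof (rule mult_right_mono)
            show "s\<^sup>2 \<le> s" using mult_left_mono[OF s1, of s] spos by (simp add: power2_eq_square)
          qed simp
          ultimately show ?thesis by (simp add: K_def algebra_simps)
        qed
        also have "\<dots> < t"
        proof -
          have "s * K i \<le> (gap i / (K i + 1)) / 2 * K i"
          proof (rule mult_right_mono)
            show "s \<le> gap i / (K i + 1) / 2" unfolding s_def by (rule divide_right_mono[OF s0g[OF iIJ]]) simp
          qed (rule Kpos)
          also have "\<dots> < gap i"
          proof -
            have "(gap i / (K i + 1)) / 2 * K i = gap i * (K i / (2 * (K i + 1)))" by simp
            also have "\<dots> < gap i * 1"
            proof (intro mult_strict_left_mono)
              show "K i / (2 * (K i + 1)) < 1" using Kpos[of i] by (subst divide_less_eq_1_pos) auto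
            qed (use gpos[OF iIJ] in auto)
            finally show ?thesis by simp
          qed
          finally show ?thesis by (simp add: gap_def)
        qed
        finally show ?thesis .
      qed
      have "\<Phi> (ys s) < t" unfolding \<Phi>_def using fin \<open>I \<noteq> {}\<close> lt by (subst Max_less_iff) auto
      moreover have "\<Phi> y0 \<le> \<Phi> (ys s)" using y0min ysH spos s1 by auto
      ultimately show False by (simp add: t_def)
    qed
    hence "y0 \<in> convex hull (q ` J)" using PC by (simp add: C_def)
    then obtain u where u0: "\<forall>x\<in>q ` J. 0 \<le> u x" and u1: "sum u (q ` J) = 1"
      and uy: "(\<Sum>x\<in>q ` J. u x *\<^sub>R x) = y0"
      using convex_hull_finite[of "q ` J"] finJ by auto
    define S where "S = q ` J"
    have finS: "finite S" using finJ by (simp add: S_def)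
    define \<iota> where "\<iota> s = inv_into J q s" for s
    have \<iota>J: "\<iota> s \<in> J" if "s \<in> S" for s using that by (simp add: \<iota>_def S_def inv_into_into)
    have q\<iota>: "q (\<iota> s) = s" if "s \<in> S" for s using that by (simp add: \<iota>_def S_def f_inv_into_f)
    define pp where "pp s = p (\<iota> s)" for s
    have eqs: "(norm (s - y0))\<^sup>2 = t + (norm (pp s - z))\<^sup>2" if "s \<in> S" for s
    proof -
      have "v (\<iota> s) y0 = t" using \<iota>J[OF that] by (simp add: J_def)
      thus ?thesis using q\<iota>[OF that] by (simp add: v_def pp_def norm_minus_commute)
    qed
    have le: "(\<Sum>s\<in>S. \<Sum>s'\<in>S. u s * u s' * (norm (id s - id s'))\<^sup>2)
        \<le> (\<Sum>s\<in>S. \<Sum>s'\<in>S. u s * u s' * (norm (pp s - pp s'))\<^sup>2)"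
    proof (intro sum_mono mult_left_mono)
      fix s s' assume "s \<in> S" "s' \<in> S"
      have "norm (q (\<iota> s) - q (\<iota> s')) \<le> norm (pp s - pp s')"
        unfolding pp_def using \<iota>J[OF \<open>s \<in> S\<close>] \<iota>J[OF \<open>s' \<in> S\<close>] JI by (intro ne) auto
      hence "norm (id s - id s') \<le> norm (pp s - pp s')"
        using q\<iota>[OF \<open>s \<in> S\<close>] q\<iota>[OF \<open>s' \<in> S\<close>] by (metis id_apply)
      thus "(norm (id s - id s'))\<^sup>2 \<le> (norm (pp s - pp s'))\<^sup>2"
        by (rule power_mono) (rule norm_ge_zero)
      have "0 \<le> u s" using u0 \<open>s \<in> S\<close> unfolding S_def by blast
      moreover have "0 \<le> u s'" using u0 \<open>s' \<in> S\<close> unfolding S_def by blast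
      ultimately show "0 \<le> u s * u s'" by (rule mult_nonneg_nonneg)
    qed
    have u1': "sum u S = 1" using u1 by (simp add: S_def)
    have uy': "(\<Sum>s\<in>S. u s *\<^sub>R id s) = y0" using uy by (simp add: S_def)
    have id1: "(\<Sum>s\<in>S. \<Sum>s'\<in>S. u s * u s' * (norm (id s - id s'))\<^sup>2) = 2 * (\<Sum>s\<in>S. u s * (norm (s - y0))\<^sup>2)"
      using double_sum_identity[OF finS u1', of id y0] unfolding uy' by simp
    have id2: "(\<Sum>s\<in>S. \<Sum>s'\<in>S. u s * u s' * (norm (pp s - pp s'))\<^sup>2) \<le> 2 * (\<Sum>s\<in>S. u s * (norm (pp s - z))\<^sup>2)"
      using double_sum_identity[OF finS u1', of pp z] by simp
    have "(\<Sum>s\<in>S. u s * (norm (s - y0))\<^sup>2) = (\<Sum>s\<in>S. u s * t + u s * (norm (pp s - z))\<^sup>2)"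
      using eqs by (intro sum.cong) (auto simp: algebra_simps)
    also have "\<dots> = t + (\<Sum>s\<in>S. u s * (norm (pp s - z))\<^sup>2)"
      using u1' by (simp add: sum.distrib sum_distrib_right[symmetric])
    finally have "2 * t + 2 * (\<Sum>s\<in>S. u s * (norm (pp s - z))\<^sup>2) \<le> 2 * (\<Sum>s\<in>S. u s * (norm (pp s - z))\<^sup>2)"
      using le id1 id2 by linarith
    hence "t \<le> 0" by linarith
    thus ?thesis using tpos by linarith
  qed
qed



lemma para_bound:
  fixes x y :: "'a::real_inner"
  assumes "norm x \<le> h" "norm y \<le> h" "l \<le> norm ((1/2) *\<^sub>R (x + y))" "0 \<le> l"
  shows "(norm (x - y))\<^sup>2 \<le> 4 * h\<^sup>2 - 4 * l\<^sup>2"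
proof -
  have par: "(norm (x - y))\<^sup>2 + (norm (x + y))\<^sup>2 = 2 * (norm x)\<^sup>2 + 2 * (norm y)\<^sup>2"
    unfolding power2_norm_eq_inner by (simp add: inner_diff_left inner_diff_right inner_add_left inner_add_right inner_commute)
  have "norm (x + y) = 2 * norm ((1/2) *\<^sub>R (x + y))" by simp
  hence "2 * l \<le> norm (x + y)" using assms(3) by simp
  hence "(2 * l)\<^sup>2 \<le> (norm (x + y))\<^sup>2" using assms(4) by (intro power_mono) auto
  moreover have "(norm x)\<^sup>2 \<le> h\<^sup>2" using assms(1) by (intro power_mono) auto
  moreover have "(norm y)\<^sup>2 \<le> h\<^sup>2" using assms(2) by (intro power_mono) auto
  ultimately show ?thesis using par by (simp add: power_mult_distrib)
qed

lemma mid_diff: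
  fixes a b c :: "'a::real_vector"
  shows "(1/2) *\<^sub>R (a + b) - c = (1/2) *\<^sub>R ((a - c) + (b - c))"
proof -
  have "(1/2) *\<^sub>R ((a - c) + (b - c)) = (1/2) *\<^sub>R (a + b) - (1/2) *\<^sub>R (c + c)"
    by (simp add: algebra_simps)
  thus ?thesis by (simp add: scaleR_half_double)
qed

lemma balls_fip:
  fixes c :: "'g \<Rightarrow> 'a::{real_inner,complete_space}" and r :: "'g \<Rightarrow> real"
  assumes fip: "\<And>F. finite F \<Longrightarrow> F \<subseteq> G \<Longrightarrow> \<exists>y. \<forall>g\<in>F. norm (y - c g) \<le> r g"
  shows "\<exists>y. \<forall>g\<in>G. norm (y - c g) \<le> r g"
proof (cases "G = {}")
  case True
  thus ?thesis by simp
next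
  case False
  then obtain g0 where g0: "g0 \<in> G" by blast
  define K where "K F = {y. \<forall>g\<in>F. norm (y - c g) \<le> r g}" for F
  define d where "d F = Inf (norm ` K F)" for F
  define FS where "FS = {F. finite F \<and> F \<subseteq> G}"
  have Kne: "K F \<noteq> {}" if "F \<in> FS" for F using fip that by (auto simp: K_def FS_def)
  have bdd: "bdd_below (norm ` K F)" for F by (rule bdd_belowI[of _ 0]) auto
  have dle: "d F \<le> norm y" if "y \<in> K F" for F y unfolding d_def by (rule cInf_lower) (use that bdd in auto)
  have dge0: "0 \<le> d F" if "F \<in> FS" for F unfolding d_def using Kne[OF that] by (intro cInf_greatest) auto
  have dapprox: "\<exists>y\<in>K F. norm y < d F + e" if "F \<in> FS" "e > 0" for F e
  proof -
    have "Inf (norm ` K F) < d F + e" using that by (simp add: d_def)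
    thus ?thesis using cInf_less_iff[of "norm ` K F" "d F + e"] Kne[OF that(1)] bdd by auto
  qed
  have Kmono: "K F' \<subseteq> K F" if "F \<subseteq> F'" for F F' using that by (auto simp: K_def)
  have dmono: "d F \<le> d F'" if "F' \<in> FS" "F \<subseteq> F'" for F F'
    unfolding d_def using Kne[OF that(1)] Kmono[OF that(2)] bdd by (intro cInf_superset_mono) auto
  have Kmid: "(1/2) *\<^sub>R (y + y') \<in> K F" if "y \<in> K F" "y' \<in> K F" for F y y'
  proof -
    have "norm ((1/2) *\<^sub>R (y + y') - c g) \<le> r g" if "g \<in> F" for g
    proof -
      have n1: "norm (y - c g) \<le> r g" using \<open>y \<in> K F\<close> that by (auto simp: K_def)
      have n2: "norm (y' - c g) \<le> r g" using \<open>y' \<in> K F\<close> that by (auto simp: K_def)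
      have "norm ((1/2) *\<^sub>R (y + y') - c g) = (1/2) * norm ((y - c g) + (y' - c g))"
        by (simp add: mid_diff)
      also have "\<dots> \<le> (1/2) * (norm (y - c g) + norm (y' - c g))"
        by (intro mult_left_mono norm_triangle_ineq) simp
      also have "\<dots> \<le> (1/2) * (r g + r g)"
        using n1 n2 by (intro mult_left_mono add_mono) auto
      finally show ?thesis by simp
    qed
    thus ?thesis by (simp add: K_def)
  qed
  define M where "M = norm (c g0) + r g0"
  have dM: "d F \<le> M" if "F \<in> FS" for F
  proof -
    have iF: "insert g0 F \<in> FS" using that g0 by (auto simp: FS_def)
    then obtain y where y: "y \<in> K (insert g0 F)" using Kne by blast
    have "d F \<le> d (insert g0 F)" using dmono[OF iF] by auto
    also have "\<dots> \<le> norm y" using dle[OF y] .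
    also have "\<dots> \<le> norm (c g0) + norm (y - c g0)" using norm_triangle_ineq[of "c g0" "y - c g0"] by simp
    also have "\<dots> \<le> M" using y by (auto simp: K_def M_def)
    finally show ?thesis .
  qed
  define s where "s = Sup (d ` FS)"
  have emp: "{} \<in> FS" by (simp add: FS_def)
  have FSne: "d ` FS \<noteq> {}" using emp by blast
  have bddA: "bdd_above (d ` FS)" using dM by (intro bdd_aboveI[of _ M]) auto
  have ds: "d F \<le> s" if "F \<in> FS" for F unfolding s_def using that bddA by (intro cSup_upper) auto
  have s0: "0 \<le> s" using dge0[OF emp] ds[OF emp] by simp
  define \<epsilon> where "\<epsilon> n = inverse (real (Suc n))" for n
  have \<epsilon>pos: "\<epsilon> n > 0" for n by (simp add: \<epsilon>_def)
  have \<epsilon>mono: "\<epsilon> m \<le> \<epsilon> n" if "n \<le> m" for n m using that by (simp add: \<epsilon>_def le_imp_inverse_le)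
  have "\<exists>F\<in>FS. s - \<epsilon> n < d F" for n
  proof -
    have "s - \<epsilon> n < Sup (d ` FS)" using \<epsilon>pos[of n] by (simp add: s_def)
    thus ?thesis using less_cSup_iff[OF FSne bddA] by auto
  qed
  then obtain Fs where Fs: "\<And>n. Fs n \<in> FS \<and> s - \<epsilon> n < d (Fs n)" by metis
  define Gs where "Gs n = (\<Union>k\<le>n. Fs k)" for n
  have GsFS: "Gs n \<in> FS" for n using Fs by (auto simp: Gs_def FS_def)
  have Gsmono: "Gs n \<subseteq> Gs m" if "n \<le> m" for n m unfolding Gs_def using that by (intro UN_mono) auto
  have dGs: "s - \<epsilon> n < d (Gs n)" for n
  proof -
    have "d (Fs n) \<le> d (Gs n)" using GsFS by (intro dmono) (auto simp: Gs_def)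
    thus ?thesis using Fs[of n] by simp
  qed
  have "\<exists>y\<in>K (Gs n). norm y < d (Gs n) + \<epsilon> n" for n using dapprox[OF GsFS \<epsilon>pos] .
  then obtain ys where ys: "\<And>n. ys n \<in> K (Gs n) \<and> norm (ys n) < d (Gs n) + \<epsilon> n" by metis
  define B where "B n = 16 * s * \<epsilon> n + 16 * (\<epsilon> n)\<^sup>2" for n
  have key: "(norm (z - ys n))\<^sup>2 \<le> B n" if "z \<in> K (Gs n)" "norm z \<le> s + \<epsilon> n" for n z
  proof -
    define l where "l = max 0 (s - \<epsilon> n)"
    have "(1/2) *\<^sub>R (z + ys n) \<in> K (Gs n)" using Kmid that(1) ys by blast
    hence "d (Gs n) \<le> norm ((1/2) *\<^sub>R (z + ys n))" by (rule dle)
    hence lle: "l \<le> norm ((1/2) *\<^sub>R (z + ys n))"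
      using dGs[of n] norm_ge_zero[of "(1/2) *\<^sub>R (z + ys n)"] unfolding l_def by (intro max.boundedI) linarith+
    have ysn: "norm (ys n) \<le> s + \<epsilon> n" using ys[of n] ds[OF GsFS] by (smt (verit))
    have "(norm (z - ys n))\<^sup>2 \<le> 4 * (s + \<epsilon> n)\<^sup>2 - 4 * l\<^sup>2"
      by (rule para_bound[OF that(2) ysn lle]) (simp add: l_def)
    also have "\<dots> \<le> B n"
    proof (cases "\<epsilon> n \<le> s")
      case True
      hence leq: "l = s - \<epsilon> n" by (simp add: l_def)
      have "4 * (s + \<epsilon> n)\<^sup>2 - 4 * l\<^sup>2 = 16 * s * \<epsilon> n" unfolding leq by (simp add: power2_eq_square algebra_simps)
      thus ?thesis by (simp add: B_def)
    next
      case False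
      hence "l = 0" by (simp add: l_def)
      moreover have "(s + \<epsilon> n)\<^sup>2 \<le> (2 * \<epsilon> n)\<^sup>2" using False s0 by (intro power_mono) auto
      moreover have "0 \<le> 16 * s * \<epsilon> n" using s0 \<epsilon>pos[of n] by simp
      ultimately show ?thesis by (simp add: B_def power_mult_distrib; linarith)
    qed
    finally show ?thesis .
  qed
  have \<epsilon>lim: "\<epsilon> \<longlonglongrightarrow> 0" unfolding \<epsilon>_def by (rule LIMSEQ_inverse_real_of_nat)
  have Blim: "B \<longlonglongrightarrow> 0"
  proof -
    have "(\<lambda>n. 16 * s * \<epsilon> n + 16 * (\<epsilon> n)\<^sup>2) \<longlonglongrightarrow> 16 * s * 0 + 16 * 0\<^sup>2"
      by (intro tendsto_intros \<epsilon>lim)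
    thus ?thesis by (simp add: B_def[abs_def])
  qed
  have sq: "norm (z - ys n) \<le> sqrt (B n)" if "z \<in> K (Gs n)" "norm z \<le> s + \<epsilon> n" for n z
    using key[OF that] by (simp add: real_le_rsqrt)
  have sqlim: "(\<lambda>n. sqrt (B n)) \<longlonglongrightarrow> 0"
    using tendsto_real_sqrt[OF Blim] by simp
  have ysbound: "norm (ys m) \<le> s + \<epsilon> n" if "n \<le> m" for n m
    using ys[of m] ds[OF GsFS[of m]] \<epsilon>mono[OF that] by (smt (verit))
  have ysK: "ys m \<in> K (Gs n)" if "n \<le> m" for n m
    using ys[of m] Kmono[OF Gsmono[OF that]] by blast
  have "Cauchy ys"
  proof (rule CauchyI)
    fix e :: real assume "e > 0"
    hence "e / 2 > 0" by simp
    from order_tendstoD(2)[OF sqlim this] obtain N where N: "\<And>n. n \<ge> N \<Longrightarrow> sqrt (B n) < e / 2"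
      by (auto simp: eventually_sequentially)
    have hN: "norm (ys m - ys N) < e / 2" if "m \<ge> N" for m
      using sq[OF ysK[OF that] ysbound[OF that]] N[of N] by simp
    have "norm (ys m - ys n) < e" if "m \<ge> N" "n \<ge> N" for m n
    proof -
      have a: "norm (ys m - ys N) < e / 2" "norm (ys n - ys N) < e / 2" using that hN by auto
      have "ys m - ys n = (ys m - ys N) - (ys n - ys N)" by simp
      hence "norm (ys m - ys n) \<le> norm (ys m - ys N) + norm (ys n - ys N)"
        using norm_triangle_ineq4[of "ys m - ys N" "ys n - ys N"] by simp
      thus ?thesis using a by linarith
    qed
    thus "\<exists>M. \<forall>m\<ge>M. \<forall>n\<ge>M. norm (ys m - ys n) < e" by blast
  qed
  then obtain y where ylim: "ys \<longlonglongrightarrow> y" using Cauchy_convergent_iff convergent_def by blast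
  have "norm (y - c g) \<le> r g" if "g \<in> G" for g
  proof -
    have iG: "insert g (Gs n) \<in> FS" for n using GsFS[of n] that by (auto simp: FS_def)
    have "\<exists>z\<in>K (insert g (Gs n)). norm z < d (insert g (Gs n)) + \<epsilon> n" for n using dapprox[OF iG \<epsilon>pos] .
    then obtain zs where zs: "\<And>n. zs n \<in> K (insert g (Gs n)) \<and> norm (zs n) < d (insert g (Gs n)) + \<epsilon> n" by metis
    have zsK: "zs n \<in> K (Gs n)" for n using zs[of n] Kmono[of "Gs n" "insert g (Gs n)"] by blast
    have zsb: "norm (zs n) \<le> s + \<epsilon> n" for n using zs[of n] ds[OF iG[of n]] by (smt (verit))
    have "(\<lambda>n. zs n - ys n) \<longlonglongrightarrow> 0"
      by (rule Lim_null_comparison[OF _ sqlim]) (use sq[OF zsK zsb] in auto)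
    hence "(\<lambda>n. ys n + (zs n - ys n)) \<longlonglongrightarrow> y + 0" by (intro tendsto_intros ylim)
    hence zlim: "zs \<longlonglongrightarrow> y" by simp
    have "(\<lambda>n. norm (zs n - c g)) \<longlonglongrightarrow> norm (y - c g)" by (intro tendsto_intros zlim)
    moreover have "norm (zs n - c g) \<le> r g" for n using zs[of n] by (auto simp: K_def)
    ultimately show ?thesis by (intro LIMSEQ_le_const2) auto
  qed
  thus ?thesis by blast
qed



lemma mono_nonexp:
  fixes a b a' b' :: "'a::real_inner"
  assumes "0 \<le> inner (a - b) (a' - b')"
  shows "norm ((a - a') - (b - b')) \<le> norm ((a + a') - (b + b'))"
proof -
  have e1: "(a - a') - (b - b') = (a - b) - (a' - b')" by simp
  have e2: "(a + a') - (b + b') = (a - b) + (a' - b')" by simp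
  have "(norm ((a - b) - (a' - b')))\<^sup>2 = (norm (a - b))\<^sup>2 - 2 * inner (a - b) (a' - b') + (norm (a' - b'))\<^sup>2"
    unfolding power2_norm_eq_inner by (simp add: inner_diff_left inner_diff_right inner_commute)
  moreover have "(norm ((a - b) + (a' - b')))\<^sup>2 = (norm (a - b))\<^sup>2 + 2 * inner (a - b) (a' - b') + (norm (a' - b'))\<^sup>2"
    unfolding power2_norm_eq_inner by (simp add: inner_add_left inner_add_right inner_commute)
  ultimately have "(norm ((a - b) - (a' - b')))\<^sup>2 \<le> (norm ((a - b) + (a' - b')))\<^sup>2" using assms by linarith
  hence "norm ((a - b) - (a' - b')) \<le> norm ((a - b) + (a' - b'))"
    using power2_le_imp_le norm_ge_zero by blast
  thus ?thesis unfolding e1 e2 .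
qed

lemma inner_sum_diff_sq:
  fixes u w :: "'a::real_inner"
  shows "inner (u + w) (u - w) = (norm u)\<^sup>2 - (norm w)\<^sup>2"
  unfolding power2_norm_eq_inner by (simp add: inner_add_left inner_add_right inner_diff_left inner_diff_right inner_commute)

lemma minty:
  fixes A :: "'a::{real_inner,complete_space} \<Rightarrow> 'a set"
  assumes mm: "max_mono_op A"
  shows "\<exists>x. z - x \<in> A x"
proof -
  have mA: "mono_op A" using mm by (simp add: max_mono_op_def)
  define G where "G = {(a, a') | a a'. a' \<in> A a}"
  define c where "c g = fst g - snd g" for g :: "'a \<times> 'a"
  define r where "r g = norm (z - (fst g + snd g))" for g :: "'a \<times> 'a"
  have "\<exists>y. \<forall>g\<in>G. norm (y - c g) \<le> r g"
  proof (rule balls_fip)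
    fix F assume F: "finite F" "F \<subseteq> G"
    have "\<exists>y. \<forall>i\<in>F. norm (y - c i) \<le> norm (z - (fst i + snd i))"
      unfolding c_def
    proof (rule kirszbraun_finite[OF F(1)])
      fix i j assume ij: "i \<in> F" "j \<in> F"
      hence "snd i \<in> A (fst i)" "snd j \<in> A (fst j)" using F(2) by (auto simp: G_def)
      hence "0 \<le> inner (fst i - fst j) (snd i - snd j)" using mA by (simp add: mono_op_def)
      thus "norm ((fst i - snd i) - (fst j - snd j)) \<le> norm ((fst i + snd i) - (fst j + snd j))"
        by (rule mono_nonexp)
    qed
    thus "\<exists>y. \<forall>g\<in>F. norm (y - c g) \<le> r g" by (simp add: r_def)
  qed
  then obtain y where y: "\<And>g. g \<in> G \<Longrightarrow> norm (y - c g) \<le> r g" by blast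
  define x where "x = (1/2) *\<^sub>R (z + y)"
  have key: "0 \<le> inner (x - a) ((z - x) - a')" if "a' \<in> A a" for a a'
  proof -
    define u where "u = z - (a + a')"
    define w where "w = y - (a - a')"
    have "norm w \<le> norm u" using y[of "(a, a')"] that by (simp add: G_def c_def r_def u_def w_def)
    hence "(norm w)\<^sup>2 \<le> (norm u)\<^sup>2" by (intro power_mono) auto
    hence "0 \<le> inner (u + w) (u - w)" by (simp add: inner_sum_diff_sq)
    moreover have "u + w = 2 *\<^sub>R (x - a)" by (simp add: u_def w_def x_def algebra_simps scaleR_2)
    moreover have "u - w = 2 *\<^sub>R ((z - x) - a')" by (simp add: u_def w_def x_def algebra_simps scaleR_2)
    ultimately have "0 \<le> 4 * inner (x - a) ((z - x) - a')" by simp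
    thus ?thesis by simp
  qed
  define B where "B v = A v \<union> (if v = x then {z - x} else {})" for v
  have "mono_op B" unfolding mono_op_def
  proof (intro allI impI)
    fix v1 v2 p q assume p: "p \<in> B v1" and q: "q \<in> B v2"
    show "0 \<le> inner (v1 - v2) (p - q)"
    proof (cases "p \<in> A v1")
      case pA: True
      show ?thesis
      proof (cases "q \<in> A v2")
        case True
        thus ?thesis using pA mA by (simp add: mono_op_def)
      next
        case False
        hence "v2 = x" "q = z - x" using q by (auto simp: B_def split: if_splits)
        moreover have "inner (v1 - x) (p - (z - x)) = inner (x - v1) ((z - x) - p)"
          by (metis inner_minus_left inner_minus_right minus_diff_eq)
        ultimately show ?thesis using key[OF pA] by simp
      qed
    next
      case False
      hence p1: "v1 = x" "p = z - x" using p by (auto simp: B_def split: if_splits)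
      show ?thesis
      proof (cases "q \<in> A v2")
        case True
        thus ?thesis using key[OF True] p1 by simp
      next
        case False
        hence "v2 = x" "q = z - x" using q by (auto simp: B_def split: if_splits)
        thus ?thesis using p1 by simp
      qed
    qed
  qed
  moreover have "\<forall>v. A v \<subseteq> B v" by (auto simp: B_def)
  ultimately have "B = A" using mm by (simp add: max_mono_op_def)
  hence "z - x \<in> A x" by (metis B_def UnI2 singletonI)
  thus ?thesis by blast
qed

lemma mono_unique:
  assumes "mono_op A" "y - a \<in> A a" "y - b \<in> A b"
  shows "a = b"
proof -
  have h: "0 \<le> inner (a - b) ((y - a) - (y - b))" using assms unfolding mono_op_def by blast
  have "(y - a) - (y - b) = - (a - b)" by simp
  hence "0 \<le> inner (a - b) (- (a - b))" using h by metis
  hence "inner (a - b) (a - b) \<le> 0" by (metis inner_minus_right neg_0_le_iff_le)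
  hence "inner (a - b) (a - b) = 0" using inner_ge_zero[of "a - b"] by linarith
  thus ?thesis by simp
qed

lemma resolvent_eq:
  assumes "mono_op A" "y - a \<in> A a"
  shows "resolvent A y = a"
  unfolding resolvent_def using assms mono_unique by (intro the_equality) blast+

lemma resolvent_in:
  fixes A :: "'a::{real_inner,complete_space} \<Rightarrow> 'a set"
  assumes "max_mono_op A"
  shows "y - resolvent A y \<in> A (resolvent A y)"
proof -
  obtain a where a: "y - a \<in> A a" using minty[OF assms] by blast
  have "mono_op A" using assms by (simp add: max_mono_op_def)
  thus ?thesis using resolvent_eq a by metis
qed

lemma max_mono_scale:
  fixes A :: "'a::real_inner \<Rightarrow> 'a set"
  assumes mm: "max_mono_op A" and g: "\<gamma> > 0"
  shows "max_mono_op (\<lambda>x. (\<lambda>u. \<gamma> *\<^sub>R u) ` A x)"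
proof -
  have mA: "mono_op A" using mm by (simp add: max_mono_op_def)
  have m1: "mono_op (\<lambda>x. (\<lambda>u. \<gamma> *\<^sub>R u) ` A x)"
    using mA g unfolding mono_op_def by (auto simp flip: scaleR_diff_right)
  have "B = (\<lambda>x. (\<lambda>u. \<gamma> *\<^sub>R u) ` A x)"
    if mB: "mono_op B" and sub: "\<forall>x. (\<lambda>u. \<gamma> *\<^sub>R u) ` A x \<subseteq> B x" for B
  proof -
    define B' where "B' x = (\<lambda>u. (1/\<gamma>) *\<^sub>R u) ` B x" for x
    have "mono_op B'"
      using mB g unfolding mono_op_def B'_def by (auto simp flip: scaleR_diff_right)
    moreover have "\<forall>x. A x \<subseteq> B' x"
    proof (intro allI subsetI)
      fix x u assume "u \<in> A x"
      hence "\<gamma> *\<^sub>R u \<in> B x" using sub by blast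
      moreover have "u = (1/\<gamma>) *\<^sub>R (\<gamma> *\<^sub>R u)" using g by simp
      ultimately show "u \<in> B' x" unfolding B'_def by blast
    qed
    ultimately have "B' = A" using mm by (simp add: max_mono_op_def)
    have "B x = (\<lambda>u. \<gamma> *\<^sub>R u) ` A x" for x
    proof -
      have "B x = (\<lambda>u. \<gamma> *\<^sub>R u) ` B' x"
        unfolding B'_def image_image using g by simp
      thus ?thesis using \<open>B' = A\<close> by simp
    qed
    thus ?thesis by blast
  qed
  thus ?thesis using m1 unfolding max_mono_op_def by blast
qed

lemma inv_inv_op: "inv_op (inv_op A) = A"
  by (simp add: inv_op_def)

lemma max_mono_inv:
  assumes mm: "max_mono_op A"
  shows "max_mono_op (inv_op A)"
proof -
  have mA: "mono_op A" using mm by (simp add: max_mono_op_def)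
  have mono_inv: "mono_op (inv_op C)" if "mono_op C" for C :: "'a \<Rightarrow> 'a set"
    using that unfolding mono_op_def inv_op_def by (simp, metis inner_commute)
  have "B = inv_op A" if mB: "mono_op B" and sub: "\<forall>x. inv_op A x \<subseteq> B x" for B
  proof -
    have "mono_op (inv_op B)" by (rule mono_inv[OF mB])
    moreover have "\<forall>x. A x \<subseteq> inv_op B x" using sub by (auto simp: inv_op_def)
    ultimately have "inv_op B = A" using mm by (simp add: max_mono_op_def)
    hence "inv_op (inv_op B) = inv_op A" by simp
    thus ?thesis by (simp add: inv_inv_op)
  qed
  thus ?thesis using mono_inv[OF mA] unfolding max_mono_op_def by blast
qed

lemma dom_inv_op: "dom_op (inv_op A) = ran_op A"
  by (auto simp: dom_op_def ran_op_def inv_op_def)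

lemma resolvent_inv:
  fixes A :: "'a::{real_inner,complete_space} \<Rightarrow> 'a set"
  assumes mm: "max_mono_op A"
  shows "resolvent (inv_op A) y = y - resolvent A y"
proof -
  have "mono_op (inv_op A)" using max_mono_inv[OF mm] by (simp add: max_mono_op_def)
  moreover have "y - (y - resolvent A y) \<in> inv_op A (y - resolvent A y)"
    using resolvent_in[OF mm, of y] by (simp add: inv_op_def)
  ultimately show ?thesis by (rule resolvent_eq)
qed

lemma small_arith:
  fixes t \<gamma> K C e :: real
  assumes "0 \<le> t" "0 < \<gamma>" "\<gamma> \<le> 1" "0 \<le> K" "0 \<le> C" "0 < e"
    and "2 * t\<^sup>2 \<le> \<gamma> * (K * t + C)"
    and "\<gamma> \<le> e\<^sup>2 / (K\<^sup>2 + 2 * C + 1)"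
  shows "t < e"
proof -
  have "\<gamma> * K * t \<le> ((\<gamma> * K)\<^sup>2 + t\<^sup>2) / 2"
    using sum_squares_ge_zero[of "\<gamma> * K - t" 0] by (simp add: power2_diff algebra_simps power2_eq_square)
  hence "3 * t\<^sup>2 \<le> (\<gamma> * K)\<^sup>2 + 2 * \<gamma> * C" using assms(7) by (simp add: algebra_simps)
  also have "(\<gamma> * K)\<^sup>2 \<le> \<gamma> * K\<^sup>2"
  proof -
    have "(\<gamma> * K)\<^sup>2 = \<gamma> * (\<gamma> * K\<^sup>2)" by (simp add: power2_eq_square)
    also have "\<dots> \<le> \<gamma> * (1 * K\<^sup>2)" using assms(2,3) by (intro mult_left_mono mult_right_mono) auto
    finally show ?thesis by simp
  qed
  finally have "3 * t\<^sup>2 \<le> \<gamma> * (K\<^sup>2 + 2 * C)" by (simp add: algebra_simps)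
  also have "\<dots> \<le> \<gamma> * (K\<^sup>2 + 2 * C + 1)" using assms(2) by simp
  also have "\<dots> \<le> e\<^sup>2"
  proof -
    have "K\<^sup>2 + 2 * C + 1 > 0" using assms(5) by (simp add: add_nonneg_pos)
    thus ?thesis using assms(8) by (simp add: le_divide_eq)
  qed
  moreover have "0 < e\<^sup>2" using assms(6) by simp
  ultimately have "t\<^sup>2 < e\<^sup>2" by linarith
  thus ?thesis using assms(1,6) by (simp add: power2_less_imp_less)
qed

lemma mid_dom:
  fixes A :: "'a::{real_inner,complete_space} \<Rightarrow> 'a set"
  assumes mm: "max_mono_op A" and a1: "a1 \<in> dom_op A" and a2: "a2 \<in> dom_op A"
  shows "(1/2) *\<^sub>R (a1 + a2) \<in> closure (dom_op A)"
proof -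
  have mA: "mono_op A" using mm by (simp add: max_mono_op_def)
  obtain s1 where s1: "s1 \<in> A a1" using a1 by (auto simp: dom_op_def)
  obtain s2 where s2: "s2 \<in> A a2" using a2 by (auto simp: dom_op_def)
  define m where "m = (1/2) *\<^sub>R (a1 + a2)"
  define K where "K = norm s1 + norm s2"
  define C where "C = norm (m - a1) * norm s1 + norm (m - a2) * norm s2"
  have K0: "0 \<le> K" and C0: "0 \<le> C" by (simp_all add: K_def C_def)
  have "\<exists>x\<in>dom_op A. dist x m < e" if e: "e > 0" for e
  proof -
    define \<gamma> where "\<gamma> = min 1 (e\<^sup>2 / (K\<^sup>2 + 2 * C + 1))"
    have den: "K\<^sup>2 + 2 * C + 1 > 0" using C0 by (simp add: add_nonneg_pos)
    have gpos: "\<gamma> > 0" using e den by (simp add: \<gamma>_def)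
    have g1: "\<gamma> \<le> 1" and g2: "\<gamma> \<le> e\<^sup>2 / (K\<^sup>2 + 2 * C + 1)" by (simp_all add: \<gamma>_def)
    obtain x where "m - x \<in> (\<lambda>u. \<gamma> *\<^sub>R u) ` A x" using minty[OF max_mono_scale[OF mm gpos]] by blast
    then obtain xs where xs: "xs \<in> A x" and mx: "m - x = \<gamma> *\<^sub>R xs" by blast
    define t where "t = norm (x - m)"
    have ineq: "- inner (x - ai) (x - m) \<ge> \<gamma> * inner (x - ai) si" if "si \<in> A ai" for ai si
    proof -
      have "0 \<le> inner (x - ai) (xs - si)" using mA xs that by (simp add: mono_op_def)
      hence "0 \<le> \<gamma> * inner (x - ai) (xs - si)" using gpos by simp
      also have "\<gamma> * inner (x - ai) (xs - si) = inner (x - ai) (\<gamma> *\<^sub>R xs) - \<gamma> * inner (x - ai) si"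
        by (simp add: inner_diff_right algebra_simps)
      also have "\<gamma> *\<^sub>R xs = - (x - m)" using mx by simp
      finally have "\<gamma> * inner (x - ai) si \<le> inner (x - ai) (- (x - m))" by simp
      thus ?thesis by (simp only: inner_minus_right)
    qed
    have sum2: "inner (x - a1) (x - m) + inner (x - a2) (x - m) = 2 * t\<^sup>2"
    proof -
      have "(x - a1) + (x - a2) = 2 *\<^sub>R (x - m)" by (simp add: m_def algebra_simps scaleR_2)
      hence "inner ((x - a1) + (x - a2)) (x - m) = 2 * inner (x - m) (x - m)" by simp
      thus ?thesis by (simp add: inner_add_left t_def power2_norm_eq_inner)
    qed
    have bnd: "- inner (x - ai) si \<le> (t + norm (m - ai)) * norm si" for ai si
    proof -
      have "- inner (x - ai) si \<le> norm (x - ai) * norm si"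
        using Cauchy_Schwarz_ineq2[of "x - ai" si] by (simp add: abs_le_iff)
      also have "norm (x - ai) \<le> t + norm (m - ai)"
        using norm_triangle_ineq[of "x - m" "m - ai"] by (simp add: t_def)
      hence "norm (x - ai) * norm si \<le> (t + norm (m - ai)) * norm si" by (rule mult_right_mono) simp
      finally show ?thesis .
    qed
    have "2 * t\<^sup>2 \<le> \<gamma> * (- inner (x - a1) s1 - inner (x - a2) s2)"
      using ineq[OF s1] ineq[OF s2] sum2 by (simp add: algebra_simps)
    also have "\<dots> \<le> \<gamma> * (K * t + C)"
    proof (rule mult_left_mono)
      show "- inner (x - a1) s1 - inner (x - a2) s2 \<le> K * t + C"
        using bnd[of a1 s1] bnd[of a2 s2] by (simp add: K_def C_def algebra_simps)
    qed (use gpos in simp)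
    finally have "2 * t\<^sup>2 \<le> \<gamma> * (K * t + C)" .
    hence "t < e" using small_arith[OF _ gpos g1 K0 C0 e _ g2] by (simp add: t_def)
    moreover have "x \<in> dom_op A" using xs by (auto simp: dom_op_def)
    ultimately show ?thesis by (auto simp: t_def dist_norm)
  qed
  thus ?thesis unfolding m_def[symmetric] by (simp add: closure_approachable)
qed

lemma mid_ran:
  fixes A :: "'a::{real_inner,complete_space} \<Rightarrow> 'a set"
  assumes mm: "max_mono_op A" and a1: "a1 \<in> ran_op A" and a2: "a2 \<in> ran_op A"
  shows "(1/2) *\<^sub>R (a1 + a2) \<in> closure (ran_op A)"
  using mid_dom[OF max_mono_inv[OF mm]] a1 a2 by (simp add: dom_inv_op)



lemma closure_mid:
  fixes X :: "'a::real_normed_vector set"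
  assumes mid: "\<And>x y. x \<in> X \<Longrightarrow> y \<in> X \<Longrightarrow> (1/2) *\<^sub>R (x + y) \<in> closure X"
    and x: "x \<in> closure X" and y: "y \<in> closure X"
  shows "(1/2) *\<^sub>R (x + y) \<in> closure X"
  unfolding closure_approachable
proof (intro allI impI)
  fix e :: real assume e: "e > 0"
  hence e3: "e / 3 > 0" by simp
  obtain x' where x': "x' \<in> X" "dist x' x < e / 3" using x e3 unfolding closure_approachable by blast
  obtain y' where y': "y' \<in> X" "dist y' y < e / 3" using y e3 unfolding closure_approachable by blast
  have "(1/2) *\<^sub>R (x' + y') \<in> closure X" using mid x'(1) y'(1) .
  then obtain z where z: "z \<in> X" "dist z ((1/2) *\<^sub>R (x' + y')) < e / 3"
    using e3 unfolding closure_approachable by blast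
  have "(1/2) *\<^sub>R (x' + y') - (1/2) *\<^sub>R (x + y) = (1/2) *\<^sub>R ((x' - x) + (y' - y))"
    by (simp add: algebra_simps)
  hence "dist ((1/2) *\<^sub>R (x' + y')) ((1/2) *\<^sub>R (x + y)) = (1/2) * norm ((x' - x) + (y' - y))"
    by (simp add: dist_norm)
  also have "\<dots> \<le> (1/2) * (norm (x' - x) + norm (y' - y))"
    by (intro mult_left_mono norm_triangle_ineq) simp
  also have "\<dots> < (1/2) * (e / 3 + e / 3)"
    using x'(2) y'(2) by (intro mult_strict_left_mono add_strict_mono) (auto simp: dist_norm)
  finally have "dist ((1/2) *\<^sub>R (x' + y')) ((1/2) *\<^sub>R (x + y)) < e / 3" by simp
  hence "dist z ((1/2) *\<^sub>R (x + y)) < e"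
    using z(2) dist_triangle[of z "(1/2) *\<^sub>R (x + y)" "(1/2) *\<^sub>R (x' + y')"] e by linarith
  thus "\<exists>z\<in>X. dist z ((1/2) *\<^sub>R (x + y)) < e" using z(1) by blast
qed

lemma closure_diff_mem:
  fixes X Y :: "'a::real_normed_vector set"
  assumes a: "a \<in> closure X" and b: "b \<in> closure Y"
  shows "a - b \<in> closure {x - y | x y. x \<in> X \<and> y \<in> Y}"
  unfolding closure_approachable
proof (intro allI impI)
  fix e :: real assume e: "e > 0"
  hence e2: "e / 2 > 0" by simp
  obtain x where x: "x \<in> X" "dist x a < e / 2" using a e2 unfolding closure_approachable by blast
  obtain y where y: "y \<in> Y" "dist y b < e / 2" using b e2 unfolding closure_approachable by blast
  have "dist (x - y) (a - b) = norm ((x - a) - (y - b))" by (simp add: dist_norm algebra_simps)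
  also have "\<dots> \<le> norm (x - a) + norm (y - b)" by (rule norm_triangle_ineq4)
  also have "\<dots> < e / 2 + e / 2" using x(2) y(2) by (intro add_strict_mono) (auto simp: dist_norm)
  finally have "dist (x - y) (a - b) < e" by simp
  moreover have "x - y \<in> {x - y | x y. x \<in> X \<and> y \<in> Y}" using x(1) y(1) by blast
  ultimately show "\<exists>z\<in>{x - y | x y. x \<in> X \<and> y \<in> Y}. dist z (a - b) < e" by blast
qed

lemma closure_add_mem:
  fixes X Y :: "'a::real_normed_vector set"
  assumes a: "a \<in> closure X" and b: "b \<in> closure Y"
  shows "a + b \<in> closure {x + y | x y. x \<in> X \<and> y \<in> Y}"
  unfolding closure_approachable
proof (intro allI impI)
  fix e :: real assume e: "e > 0"
  hence e2: "e / 2 > 0" by simp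
  obtain x where x: "x \<in> X" "dist x a < e / 2" using a e2 unfolding closure_approachable by blast
  obtain y where y: "y \<in> Y" "dist y b < e / 2" using b e2 unfolding closure_approachable by blast
  have "dist (x + y) (a + b) = norm ((x - a) + (y - b))" by (simp add: dist_norm algebra_simps)
  also have "\<dots> \<le> norm (x - a) + norm (y - b)" by (rule norm_triangle_ineq)
  also have "\<dots> < e / 2 + e / 2" using x(2) y(2) by (intro add_strict_mono) (auto simp: dist_norm)
  finally have "dist (x + y) (a + b) < e" by simp
  moreover have "x + y \<in> {x + y | x y. x \<in> X \<and> y \<in> Y}" using x(1) y(1) by blast
  ultimately show "\<exists>z\<in>{x + y | x y. x \<in> X \<and> y \<in> Y}. dist z (a + b) < e" by blast
qed

lemma mid_D:
  fixes A B :: "'a::{real_inner,complete_space} \<Rightarrow> 'a set"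
  assumes mA: "max_mono_op A" and mB: "max_mono_op B"
    and d1: "d1 \<in> closure {a - b | a b. a \<in> dom_op A \<and> b \<in> dom_op B}"
    and d2: "d2 \<in> closure {a - b | a b. a \<in> dom_op A \<and> b \<in> dom_op B}"
  shows "(1/2) *\<^sub>R (d1 + d2) \<in> closure {a - b | a b. a \<in> dom_op A \<and> b \<in> dom_op B}"
proof (rule closure_mid[OF _ d1 d2])
  fix x y assume "x \<in> {a - b | a b. a \<in> dom_op A \<and> b \<in> dom_op B}" "y \<in> {a - b | a b. a \<in> dom_op A \<and> b \<in> dom_op B}"
  then obtain a1 b1 a2 b2 where xy: "x = a1 - b1" "y = a2 - b2" and
    mem: "a1 \<in> dom_op A" "b1 \<in> dom_op B" "a2 \<in> dom_op A" "b2 \<in> dom_op B" by blast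
  have "(1/2) *\<^sub>R (x + y) = (1/2) *\<^sub>R (a1 + a2) - (1/2) *\<^sub>R (b1 + b2)"
    by (simp add: xy algebra_simps)
  also have "\<dots> \<in> closure {a - b | a b. a \<in> dom_op A \<and> b \<in> dom_op B}"
    by (rule closure_diff_mem[OF mid_dom[OF mA mem(1,3)] mid_dom[OF mB mem(2,4)]])
  finally show "(1/2) *\<^sub>R (x + y) \<in> closure {a - b | a b. a \<in> dom_op A \<and> b \<in> dom_op B}" .
qed

lemma mid_R:
  fixes A B :: "'a::{real_inner,complete_space} \<Rightarrow> 'a set"
  assumes mA: "max_mono_op A" and mB: "max_mono_op B"
    and d1: "d1 \<in> closure {u + v | u v. u \<in> ran_op A \<and> v \<in> ran_op B}"
    and d2: "d2 \<in> closure {u + v | u v. u \<in> ran_op A \<and> v \<in> ran_op B}"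
  shows "(1/2) *\<^sub>R (d1 + d2) \<in> closure {u + v | u v. u \<in> ran_op A \<and> v \<in> ran_op B}"
proof (rule closure_mid[OF _ d1 d2])
  fix x y assume "x \<in> {u + v | u v. u \<in> ran_op A \<and> v \<in> ran_op B}" "y \<in> {u + v | u v. u \<in> ran_op A \<and> v \<in> ran_op B}"
  then obtain a1 b1 a2 b2 where xy: "x = a1 + b1" "y = a2 + b2" and
    mem: "a1 \<in> ran_op A" "b1 \<in> ran_op B" "a2 \<in> ran_op A" "b2 \<in> ran_op B" by blast
  have "(1/2) *\<^sub>R (x + y) = (1/2) *\<^sub>R (a1 + a2) + (1/2) *\<^sub>R (b1 + b2)"
    by (simp add: xy algebra_simps)
  also have "\<dots> \<in> closure {u + v | u v. u \<in> ran_op A \<and> v \<in> ran_op B}"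
    by (rule closure_add_mem[OF mid_ran[OF mA mem(1,3)] mid_ran[OF mB mem(2,4)]])
  finally show "(1/2) *\<^sub>R (x + y) \<in> closure {u + v | u v. u \<in> ran_op A \<and> v \<in> ran_op B}" .
qed

lemma min_norm_exists:
  fixes S :: "'a::{real_inner,complete_space} set"
  assumes cl: "closed S" and ne: "S \<noteq> {}"
    and mid: "\<And>x y. x \<in> S \<Longrightarrow> y \<in> S \<Longrightarrow> (1/2) *\<^sub>R (x + y) \<in> S"
  shows "\<exists>p\<in>S. \<forall>y\<in>S. norm p \<le> norm y"
proof -
  define d where "d = Inf (norm ` S)"
  have bdd: "bdd_below (norm ` S)" by (rule bdd_belowI[of _ 0]) auto
  have dle: "d \<le> norm y" if "y \<in> S" for y unfolding d_def by (rule cInf_lower) (use that bdd in auto)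
  have d0: "0 \<le> d" unfolding d_def using ne by (intro cInf_greatest) auto
  define \<epsilon> where "\<epsilon> n = inverse (real (Suc n))" for n
  have \<epsilon>pos: "\<epsilon> n > 0" for n by (simp add: \<epsilon>_def)
  have \<epsilon>mono: "\<epsilon> m \<le> \<epsilon> n" if "n \<le> m" for n m using that by (simp add: \<epsilon>_def le_imp_inverse_le)
  have "\<exists>y\<in>S. norm y < d + \<epsilon> n" for n
  proof -
    have "Inf (norm ` S) < d + \<epsilon> n" using \<epsilon>pos[of n] by (simp add: d_def)
    thus ?thesis using cInf_less_iff[of "norm ` S" "d + \<epsilon> n"] ne bdd by auto
  qed
  then obtain ys where ys: "\<And>n. ys n \<in> S \<and> norm (ys n) < d + \<epsilon> n" by metis
  define B where "B n = 8 * d * \<epsilon> n + 4 * (\<epsilon> n)\<^sup>2" for n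
  have key: "(norm (ys m - ys n))\<^sup>2 \<le> B n" if "n \<le> m" for n m
  proof -
    have hm: "norm (ys m) \<le> d + \<epsilon> n" using ys[of m] \<epsilon>mono[OF that] by linarith
    have hn: "norm (ys n) \<le> d + \<epsilon> n" using ys[of n] by linarith
    have "d \<le> norm ((1/2) *\<^sub>R (ys m + ys n))" using dle mid ys by blast
    hence "(norm (ys m - ys n))\<^sup>2 \<le> 4 * (d + \<epsilon> n)\<^sup>2 - 4 * d\<^sup>2"
      by (rule para_bound[OF hm hn _ d0])
    also have "\<dots> = B n" by (simp add: B_def power2_eq_square algebra_simps)
    finally show ?thesis .
  qed
  have \<epsilon>lim: "\<epsilon> \<longlonglongrightarrow> 0" unfolding \<epsilon>_def by (rule LIMSEQ_inverse_real_of_nat)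
  have Blim: "B \<longlonglongrightarrow> 0"
  proof -
    have "(\<lambda>n. 8 * d * \<epsilon> n + 4 * (\<epsilon> n)\<^sup>2) \<longlonglongrightarrow> 8 * d * 0 + 4 * 0\<^sup>2"
      by (intro tendsto_intros \<epsilon>lim)
    thus ?thesis by (simp add: B_def[abs_def])
  qed
  have sqlim: "(\<lambda>n. sqrt (B n)) \<longlonglongrightarrow> 0"
    using tendsto_real_sqrt[OF Blim] by simp
  have sq: "norm (ys m - ys n) \<le> sqrt (B n)" if "n \<le> m" for n m
    using key[OF that] by (simp add: real_le_rsqrt)
  have "Cauchy ys"
  proof (rule CauchyI)
    fix e :: real assume "e > 0"
    hence "e / 2 > 0" by simp
    from order_tendstoD(2)[OF sqlim this] obtain N where N: "\<And>n. n \<ge> N \<Longrightarrow> sqrt (B n) < e / 2"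
      by (auto simp: eventually_sequentially)
    have hN: "norm (ys m - ys N) < e / 2" if "m \<ge> N" for m
      using sq[OF that] N[of N] by simp
    have "norm (ys m - ys n) < e" if "m \<ge> N" "n \<ge> N" for m n
    proof -
      have a: "norm (ys m - ys N) < e / 2" "norm (ys n - ys N) < e / 2" using that hN by auto
      have "ys m - ys n = (ys m - ys N) - (ys n - ys N)" by simp
      hence "norm (ys m - ys n) \<le> norm (ys m - ys N) + norm (ys n - ys N)"
        using norm_triangle_ineq4[of "ys m - ys N" "ys n - ys N"] by simp
      thus ?thesis using a by linarith
    qed
    thus "\<exists>M. \<forall>m\<ge>M. \<forall>n\<ge>M. norm (ys m - ys n) < e" by blast
  qed
  then obtain p where plim: "ys \<longlonglongrightarrow> p" using Cauchy_convergent_iff convergent_def by blast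
  have pS: "p \<in> S" using closed_sequentially[OF cl _ plim] ys by blast
  have "norm p \<le> d"
  proof -
    have l1: "(\<lambda>n. norm (ys n)) \<longlonglongrightarrow> norm p" by (intro tendsto_intros plim)
    have l2: "(\<lambda>n. d + \<epsilon> n) \<longlonglongrightarrow> d + 0" by (intro tendsto_intros \<epsilon>lim)
    have ev: "eventually (\<lambda>n. norm (ys n) \<le> d + \<epsilon> n) sequentially"
      using ys by (intro always_eventually allI) (simp add: less_imp_le)
    have "norm p \<le> d + 0" by (rule tendsto_le[OF trivial_limit_sequentially l2 l1 ev])
    thus ?thesis by simp
  qed
  thus ?thesis using pS dle by force
qed

lemma proj0_iff:
  fixes S :: "'a::{real_inner,complete_space} set"
  assumes cl: "closed S" and ne: "S \<noteq> {}"
    and mid: "\<And>x y. x \<in> S \<Longrightarrow> y \<in> S \<Longrightarrow> (1/2) *\<^sub>R (x + y) \<in> S"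
  shows "proj S 0 = 0 \<longleftrightarrow> 0 \<in> S"
proof
  assume h: "proj S 0 = 0"
  obtain p where p: "p \<in> S" "\<forall>y\<in>S. norm p \<le> norm y" using min_norm_exists[OF cl ne mid] by blast
  have "proj S 0 \<in> S"
    unfolding proj_def by (rule someI2[of _ p]) (use p in \<open>auto simp: dist_0_norm\<close>)
  thus "0 \<in> S" using h by simp
next
  assume h: "0 \<in> S"
  show "proj S 0 = 0"
    unfolding proj_def by (rule someI2[of _ 0]) (use h in \<open>auto simp: dist_0_norm\<close>)
qed



lemma DR_firm:
  fixes A B :: "'a::{real_inner,complete_space} \<Rightarrow> 'a set"
  assumes mA: "max_mono_op A" and mB: "max_mono_op B"
  shows "0 \<le> inner (DR_op A B x - DR_op A B x') ((x - DR_op A B x) - (x' - DR_op A B x'))"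
proof -
  have mmA: "mono_op A" using mA by (simp add: max_mono_op_def)
  have mmB: "mono_op B" using mB by (simp add: max_mono_op_def)
  define a where "a = resolvent A x"
  define a' where "a' = resolvent A x'"
  define as where "as = x - a"
  define as' where "as' = x' - a'"
  define b where "b = resolvent B (2 *\<^sub>R a - x)"
  define b' where "b' = resolvent B (2 *\<^sub>R a' - x')"
  define bs where "bs = (2 *\<^sub>R a - x) - b"
  define bs' where "bs' = (2 *\<^sub>R a' - x') - b'"
  have asA: "as \<in> A a" "as' \<in> A a'" using resolvent_in[OF mA] by (simp_all add: as_def a_def as'_def a'_def)
  have bsB: "bs \<in> B b" "bs' \<in> B b'" using resolvent_in[OF mB] by (simp_all add: bs_def b_def bs'_def b'_def)
  have m1: "0 \<le> inner (a - a') (as - as')" using mmA asA by (simp add: mono_op_def)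
  have m2: "0 \<le> inner (b - b') (bs - bs')" using mmB bsB by (simp add: mono_op_def)
  have Tx: "DR_op A B x = as + b" by (simp add: DR_op_def reflected_resolvent_def a_def b_def as_def)
  have Tx': "DR_op A B x' = as' + b'" by (simp add: DR_op_def reflected_resolvent_def a'_def b'_def as'_def)
  define p where "p = a - a'"
  define q where "q = as - as'"
  define r where "r = b - b'"
  have e1: "DR_op A B x - DR_op A B x' = q + r" by (simp add: Tx Tx' q_def r_def algebra_simps)
  have e2: "(x - DR_op A B x) - (x' - DR_op A B x') = p - r"
    by (simp add: Tx Tx' p_def r_def as_def as'_def algebra_simps)
  have e3: "bs - bs' = p - q - r" by (simp add: bs_def bs'_def p_def q_def r_def as_def as'_def algebra_simps scaleR_2)
  have "inner (q + r) (p - r) = inner p q + inner r (p - q - r)"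
    by (simp add: inner_add_left inner_add_right inner_diff_right inner_diff_left inner_commute)
  also have "\<dots> \<ge> 0" using m1 m2 unfolding p_def[symmetric] q_def[symmetric] r_def[symmetric] e3 by simp
  finally show ?thesis unfolding e1 e2 .
qed

lemma firm_sq:
  fixes u v :: "'a::real_inner"
  assumes "0 \<le> inner u v"
  shows "(norm u)\<^sup>2 + (norm v)\<^sup>2 \<le> (norm (u + v))\<^sup>2"
proof -
  have "(norm (u + v))\<^sup>2 = (norm u)\<^sup>2 + 2 * inner u v + (norm v)\<^sup>2"
    unfolding power2_norm_eq_inner by (simp add: inner_add_left inner_add_right inner_commute)
  thus ?thesis using assms by simp
qed

lemma DR_firm_sq:
  fixes A B :: "'a::{real_inner,complete_space} \<Rightarrow> 'a set"
  assumes mA: "max_mono_op A" and mB: "max_mono_op B"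
  shows "(norm (DR_op A B x - DR_op A B x'))\<^sup>2 + (norm ((x - DR_op A B x) - (x' - DR_op A B x')))\<^sup>2
         \<le> (norm (x - x'))\<^sup>2"
proof -
  have "(DR_op A B x - DR_op A B x') + ((x - DR_op A B x) - (x' - DR_op A B x')) = x - x'" by simp
  thus ?thesis using firm_sq[OF DR_firm[OF mA mB, of x x']] by simp
qed

lemma funpow_nonexp:
  fixes f :: "'a::real_normed_vector \<Rightarrow> 'a"
  assumes ne: "\<And>x y. norm (f x - f y) \<le> norm (x - y)"
  shows "norm ((f^^n) x - (f^^n) y) \<le> norm (x - y)"
proof (induction n)
  case 0
  then show ?case by simp
next
  case (Suc n)
  then show ?case using ne[of "(f^^n) x" "(f^^n) y"] by simp
qed

lemma funpow_disp:
  fixes f :: "'a::real_normed_vector \<Rightarrow> 'a"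
  assumes ne: "\<And>x y. norm (f x - f y) \<le> norm (x - y)"
  shows "norm (z - (f^^k) z) \<le> real k * norm (z - f z)"
proof (induction k)
  case 0
  then show ?case by simp
next
  case (Suc k)
  have "(f^^Suc k) z = (f^^k) (f z)" by (metis comp_apply funpow_Suc_right)
  hence "norm (z - (f^^Suc k) z) \<le> norm (z - (f^^k) z) + norm ((f^^k) z - (f^^k) (f z))"
    using norm_triangle_ineq[of "z - (f^^k) z" "(f^^k) z - (f^^k) (f z)"] by simp
  also have "\<dots> \<le> real k * norm (z - f z) + norm (z - f z)"
    using Suc.IH funpow_nonexp[OF ne, of k z "f z"] by linarith
  finally show ?case by (simp add: algebra_simps)
qed

lemma displacement_limit:
  fixes f :: "'a::real_inner \<Rightarrow> 'a"
  assumes firm: "\<And>x x'. (norm (f x - f x'))\<^sup>2 + (norm ((x - f x) - (x' - f x')))\<^sup>2 \<le> (norm (x - x'))\<^sup>2"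
  shows "(\<lambda>n. norm ((f^^n) x - (f^^(Suc n)) x)) \<longlonglongrightarrow> Inf (norm ` range (\<lambda>z. z - f z))"
proof -
  have ne: "norm (f x - f x') \<le> norm (x - x')" for x x'
  proof -
    have "(norm (f x - f x'))\<^sup>2 \<le> (norm (x - x'))\<^sup>2" using firm[of x x'] by (smt (verit) zero_le_power2)
    thus ?thesis using power2_le_imp_le norm_ge_zero by blast
  qed
  define y where "y n = (f^^n) x" for n
  have ySuc: "y (Suc n) = f (y n)" for n by (simp add: y_def)
  define w where "w n = y n - y (Suc n)" for n
  define \<delta> where "\<delta> = Inf (norm ` range (\<lambda>z. z - f z))"
  have bdd: "bdd_below (norm ` range (\<lambda>z. z - f z))" by (rule bdd_belowI[of _ 0]) auto
  have \<delta>le: "\<delta> \<le> norm (z - f z)" for z unfolding \<delta>_def by (rule cInf_lower) (use bdd in auto)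
  have wge: "\<delta> \<le> norm (w n)" for n using \<delta>le[of "y n"] by (simp add: w_def ySuc)
  have W1: "(norm (w (Suc n)))\<^sup>2 + (norm (w n - w (Suc n)))\<^sup>2 \<le> (norm (w n))\<^sup>2" for n
    using firm[of "y n" "y (Suc n)"] by (simp add: w_def ySuc)
  have dec: "decseq (\<lambda>n. norm (w n))"
  proof (rule decseq_SucI)
    fix n
    have "(norm (w (Suc n)))\<^sup>2 \<le> (norm (w n))\<^sup>2" using W1[of n] by (smt (verit) zero_le_power2)
    thus "norm (w (Suc n)) \<le> norm (w n)" using power2_le_imp_le norm_ge_zero by blast
  qed
  obtain L where L: "(\<lambda>n. norm (w n)) \<longlonglongrightarrow> L" "\<forall>i. L \<le> norm (w i)"
    using decseq_convergent[OF dec, of \<delta>] wge by blast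
  have \<delta>L: "\<delta> \<le> L" using L(1) wge by (intro LIMSEQ_le_const) auto
  have diff0: "(\<lambda>n. w n - w (Suc n)) \<longlonglongrightarrow> 0"
  proof (rule Lim_null_comparison)
    have "(\<lambda>n. sqrt ((norm (w n))\<^sup>2 - (norm (w (Suc n)))\<^sup>2)) \<longlonglongrightarrow> sqrt (L\<^sup>2 - L\<^sup>2)"
      by (intro tendsto_intros L(1) LIMSEQ_Suc[OF L(1)])
    thus "(\<lambda>n. sqrt ((norm (w n))\<^sup>2 - (norm (w (Suc n)))\<^sup>2)) \<longlonglongrightarrow> 0" by simp
    show "\<forall>\<^sub>F n in sequentially. norm (w n - w (Suc n)) \<le> sqrt ((norm (w n))\<^sup>2 - (norm (w (Suc n)))\<^sup>2)"
    proof (intro always_eventually allI)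
      fix n
      have "(norm (w n - w (Suc n)))\<^sup>2 \<le> (norm (w n))\<^sup>2 - (norm (w (Suc n)))\<^sup>2" using W1[of n] by simp
      thus "norm (w n - w (Suc n)) \<le> sqrt ((norm (w n))\<^sup>2 - (norm (w (Suc n)))\<^sup>2)"
        by (simp add: real_le_rsqrt)
    qed
  qed
  have diffj: "(\<lambda>n. w n - w (n + j)) \<longlonglongrightarrow> 0" for j
  proof -
    have eq: "w n - w (n + j) = (\<Sum>i<j. w (n + i) - w (Suc (n + i)))" for n
      using sum_lessThan_telescope'[of "\<lambda>i. w (n + i)" j] by simp
    have "(\<lambda>n. \<Sum>i<j. w (n + i) - w (Suc (n + i))) \<longlonglongrightarrow> (\<Sum>i<j. 0)"
    proof (intro tendsto_sum)
      fix i
      have "(\<lambda>n. w (n + i) - w (Suc (n + i))) = (\<lambda>n. (\<lambda>m. w m - w (Suc m)) (n + i))" by simp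
      thus "(\<lambda>n. w (n + i) - w (Suc (n + i))) \<longlonglongrightarrow> 0"
        using LIMSEQ_ignore_initial_segment[OF diff0, of i] by simp
    qed
    thus ?thesis by (simp add: eq)
  qed
  have Lz: "L \<le> norm (z - f z)" for z
  proof -
    have bound: "real k * L \<le> 2 * norm (x - z) + real k * norm (z - f z)" for k
    proof -
      have b: "real k * norm (w n) \<le> 2 * norm (x - z) + real k * norm (z - f z) + (\<Sum>j<k. norm (w n - w (n + j)))" for n
      proof -
        have tel: "(\<Sum>j<k. w (n + j)) = y n - y (n + k)"
          using sum_lessThan_telescope'[of "\<lambda>j. y (n + j)" k] by (simp add: w_def)
        have "real k *\<^sub>R w n = (\<Sum>j<k. w (n + j)) + (\<Sum>j<k. w n - w (n + j))"
          by (simp add: sum_subtractf sum_constant_scaleR)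
        hence "norm (real k *\<^sub>R w n) \<le> norm (\<Sum>j<k. w (n + j)) + norm (\<Sum>j<k. w n - w (n + j))"
          by (metis norm_triangle_ineq)
        also have "norm (\<Sum>j<k. w n - w (n + j)) \<le> (\<Sum>j<k. norm (w n - w (n + j)))"
          by (rule norm_sum)
        also have "norm (\<Sum>j<k. w (n + j)) \<le> 2 * norm (x - z) + real k * norm (z - f z)"
        proof -
          have "y (n + k) = (f^^n) ((f^^k) x)" by (simp add: y_def funpow_add)
          hence "norm (y n - y (n + k)) \<le> norm (x - (f^^k) x)"
            using funpow_nonexp[OF ne, of n x "(f^^k) x"] by (simp add: y_def)
          also have "x - (f^^k) x = (x - z) + (z - (f^^k) z) + ((f^^k) z - (f^^k) x)" by simp
          also have "norm \<dots> \<le> norm (x - z) + norm (z - (f^^k) z) + norm ((f^^k) z - (f^^k) x)"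
            by (metis norm_triangle_ineq order_trans add_right_mono)
          also have "\<dots> \<le> norm (x - z) + real k * norm (z - f z) + norm (z - x)"
            using funpow_disp[OF ne, of z k] funpow_nonexp[OF ne, of k z x] by linarith
          also have "\<dots> = 2 * norm (x - z) + real k * norm (z - f z)" by (simp add: norm_minus_commute)
          finally show ?thesis using tel by simp
        qed
        finally show ?thesis by simp
      qed
      have l1: "(\<lambda>n. real k * norm (w n)) \<longlonglongrightarrow> real k * L" by (intro tendsto_intros L(1))
      have l2: "(\<lambda>n. 2 * norm (x - z) + real k * norm (z - f z) + (\<Sum>j<k. norm (w n - w (n + j))))
          \<longlonglongrightarrow> 2 * norm (x - z) + real k * norm (z - f z) + (\<Sum>j<k. norm (0::'a))"
        by (intro tendsto_intros diffj)
      have "real k * L \<le> 2 * norm (x - z) + real k * norm (z - f z) + (\<Sum>j<k. norm (0::'a))"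
        by (rule tendsto_le[OF trivial_limit_sequentially l2 l1]) (use b in \<open>intro always_eventually allI\<close>)
      thus ?thesis by simp
    qed
    show ?thesis
    proof (rule ccontr)
      assume "\<not> ?thesis"
      hence gap: "L - norm (z - f z) > 0" by simp
      obtain k :: nat where k: "2 * norm (x - z) / (L - norm (z - f z)) < real k"
        using reals_Archimedean2 by blast
      hence "2 * norm (x - z) < real k * (L - norm (z - f z))"
        using gap by (simp add: divide_less_eq mult.commute)
      thus False using bound[of k] by (simp add: algebra_simps)
    qed
  qed
  have "L \<le> \<delta>" unfolding \<delta>_def using Lz by (intro cInf_greatest) auto
  hence "L = \<delta>" using \<delta>L by simp
  thus ?thesis using L(1) by (simp add: w_def y_def \<delta>_def)
qed



lemma key_conv:
  fixes p q w :: "nat \<Rightarrow> 'a::real_inner"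
  assumes wlim: "(\<lambda>n. norm (w n)) \<longlonglongrightarrow> \<delta>" and d0: "0 \<le> \<delta>"
    and sq: "\<And>n. (norm (p n))\<^sup>2 + (norm (q n))\<^sup>2 \<le> (norm (w n))\<^sup>2"
    and lb: "\<And>n. 2 * \<delta> - norm (w (Suc n)) \<le> norm (q n)"
  shows "p \<longlonglongrightarrow> 0"
proof (rule Lim_null_comparison)
  define g where "g n = sqrt ((norm (w n))\<^sup>2 - (max 0 (2 * \<delta> - norm (w (Suc n))))\<^sup>2)" for n
  have "(\<lambda>n. sqrt ((norm (w n))\<^sup>2 - (max 0 (2 * \<delta> - norm (w (Suc n))))\<^sup>2))
        \<longlonglongrightarrow> sqrt (\<delta>\<^sup>2 - (max 0 (2 * \<delta> - \<delta>))\<^sup>2)"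
    by (intro tendsto_intros wlim LIMSEQ_Suc[OF wlim])
  moreover have "sqrt (\<delta>\<^sup>2 - (max 0 (2 * \<delta> - \<delta>))\<^sup>2) = 0" using d0 by simp
  ultimately show "g \<longlonglongrightarrow> 0" by (simp add: g_def[abs_def])
  show "\<forall>\<^sub>F n in sequentially. norm (p n) \<le> g n"
  proof (intro always_eventually allI)
    fix n
    have "max 0 (2 * \<delta> - norm (w (Suc n))) \<le> norm (q n)" using lb[of n] by simp
    hence "(max 0 (2 * \<delta> - norm (w (Suc n))))\<^sup>2 \<le> (norm (q n))\<^sup>2" by (intro power_mono) auto
    hence "(norm (p n))\<^sup>2 \<le> (norm (w n))\<^sup>2 - (max 0 (2 * \<delta> - norm (w (Suc n))))\<^sup>2"
      using sq[of n] by linarith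
    thus "norm (p n) \<le> g n" unfolding g_def by (simp add: real_le_rsqrt)
  qed
qed

lemma zero_in_closure_lim:
  fixes p :: "nat \<Rightarrow> 'a::real_normed_vector"
  assumes "p \<longlonglongrightarrow> 0" "\<And>n. p n \<in> X"
  shows "0 \<in> closure X"
  using assms closure_sequential by blast

lemma closure_norm_lb:
  fixes S :: "'a::real_normed_vector set"
  assumes "z \<in> closure S"
  shows "Inf (norm ` S) \<le> norm z"
proof -
  have "closure S \<subseteq> {z. Inf (norm ` S) \<le> norm z}"
  proof (rule closure_minimal)
    have bdd: "bdd_below (norm ` S)" by (rule bdd_belowI[of _ 0]) auto
    show "S \<subseteq> {z. Inf (norm ` S) \<le> norm z}" using bdd by (auto intro: cInf_lower)
    show "closed {z. Inf (norm ` S) \<le> norm z}" by (intro closed_Collect_le continuous_intros)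
  qed
  thus ?thesis using assms by blast
qed

lemma mid_norm:
  fixes u v :: "'a::real_normed_vector"
  shows "2 * norm ((1/2) *\<^sub>R (u + v)) \<le> norm u + norm v"
  using norm_triangle_ineq[of u v] by simp

theorem proposition5p2:
  fixes A B :: "'a::{real_inner, complete_space} \<Rightarrow> 'a set"
    and x :: 'a
  assumes "max_mono_op A" and "max_mono_op B"
    and "closure (range (\<lambda>y. y - DR_op A B y))
           = closure ({a - b | a b. a \<in> dom_op A \<and> b \<in> dom_op B}
                      \<inter> {u + v | u v. u \<in> ran_op A \<and> v \<in> ran_op B})"
    and "closure ({a - b | a b. a \<in> dom_op A \<and> b \<in> dom_op B}
                      \<inter> {u + v | u v. u \<in> ran_op A \<and> v \<in> ran_op B})
           = closure {a - b | a b. a \<in> dom_op A \<and> b \<in> dom_op B}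
             \<inter> closure {u + v | u v. u \<in> ran_op A \<and> v \<in> ran_op B}"
  shows "(asymp_regular (\<lambda>n. resolvent A ((DR_op A B ^^ n) x)) \<longleftrightarrow>
            proj (closure {u + v | u v. u \<in> ran_op A \<and> v \<in> ran_op B}) 0 = 0)
       \<and> (asymp_regular (\<lambda>n. resolvent (inv_op A) ((DR_op A B ^^ n) x)) \<longleftrightarrow>
            proj (closure {a - b | a b. a \<in> dom_op A \<and> b \<in> dom_op B}) 0 = 0)"
proof -
  note mA = assms(1) and mB = assms(2)
  have mmA: "mono_op A" using mA by (simp add: max_mono_op_def)
  define T where "T = DR_op A B"
  define Dset where "Dset = {a - b | a b. a \<in> dom_op A \<and> b \<in> dom_op B}"
  define Rset where "Rset = {u + v | u v. u \<in> ran_op A \<and> v \<in> ran_op B}"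
  define S where "S = range (\<lambda>y. y - T y)"
  have hyp: "closure S = closure Dset \<inter> closure Rset"
    using assms(3,4) by (simp add: S_def T_def Dset_def Rset_def)
  define \<delta> where "\<delta> = Inf (norm ` S)"
  have \<delta>0: "0 \<le> \<delta>" unfolding \<delta>_def S_def by (intro cInf_greatest) auto
  define y where "y n = (T^^n) x" for n
  have ySucT: "y (Suc n) = T (y n)" for n by (simp add: y_def)
  define w where "w n = y n - y (Suc n)" for n
  have wlim: "(\<lambda>n. norm (w n)) \<longlonglongrightarrow> \<delta>"
    using displacement_limit[of T x] DR_firm_sq[OF mA mB] unfolding w_def y_def \<delta>_def S_def T_def
    by blast
  define a where "a n = resolvent A (y n)" for n
  define as where "as n = y n - a n" for n
  define b where "b n = resolvent B (2 *\<^sub>R a n - y n)" for n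
  define bs where "bs n = (2 *\<^sub>R a n - y n) - b n" for n
  have asA: "as n \<in> A (a n)" for n using resolvent_in[OF mA] by (simp add: as_def a_def)
  have bsB: "bs n \<in> B (b n)" for n using resolvent_in[OF mB] by (simp add: bs_def b_def)
  have ySuc: "y (Suc n) = y n - a n + b n" for n
    by (simp add: ySucT T_def DR_op_def reflected_resolvent_def a_def b_def)
  have yas: "y n = a n + as n" for n by (simp add: as_def)
  have bs_eq: "bs n = a n - as n - b n" for n by (simp add: bs_def as_def algebra_simps scaleR_2)
  have wab: "w n = a n - b n" for n by (simp add: w_def ySuc)
  have wR: "w n = as n + bs n" for n by (simp add: wab bs_eq)
  define u where "u n = a n - a (Suc n)" for n
  define us where "us n = as n - as (Suc n)" for n
  have uR: "u n = as (Suc n) + bs n" for n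
    using yas[of "Suc n"] ySuc[of n] yas[of n] by (simp add: u_def bs_eq algebra_simps)
  have usD: "us n = a (Suc n) - b n" for n
    using yas[of "Suc n"] ySuc[of n] yas[of n] by (simp add: us_def algebra_simps)
  have uus: "u n + us n = w n" for n
    using yas[of "Suc n"] yas[of n] by (simp add: u_def us_def w_def algebra_simps)
  have ex1: "us n + w (Suc n) = as n + bs (Suc n)" for n
    by (simp add: usD wab bs_eq[of "Suc n"] uR) (metis add_diff_cancel diff_add_cancel yas ySuc us_def usD)
  have ex2: "u n + w (Suc n) = a n - b (Suc n)" for n by (simp add: u_def wab)
  have domA: "a n \<in> dom_op A" for n using asA by (auto simp: dom_op_def)
  have domB: "b n \<in> dom_op B" for n using bsB by (auto simp: dom_op_def)
  have ranA: "as n \<in> ran_op A" for n using asA by (auto simp: ran_op_def)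
  have ranB: "bs n \<in> ran_op B" for n using bsB by (auto simp: ran_op_def)
  have uinR: "u n \<in> Rset" for n unfolding Rset_def uR using ranA ranB by blast
  have usinD: "us n \<in> Dset" for n unfolding Dset_def usD using domA domB by blast
  have winD: "w n \<in> Dset" for n unfolding Dset_def wab using domA domB by blast
  have winR: "w n \<in> Rset" for n unfolding Rset_def wR using ranA ranB by blast
  have ex1R: "us n + w (Suc n) \<in> Rset" for n unfolding Rset_def ex1 using ranA ranB by blast
  have ex2D: "u n + w (Suc n) \<in> Dset" for n unfolding Dset_def ex2 using domA domB by blast
  have mono_u: "0 \<le> inner (u n) (us n)" for n
    using mmA asA[of n] asA[of "Suc n"] unfolding u_def us_def mono_op_def by blast
  have sq1: "(norm (u n))\<^sup>2 + (norm (us n))\<^sup>2 \<le> (norm (w n))\<^sup>2" for n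
    using firm_sq[OF mono_u[of n]] uus[of n] by simp
  have sq2: "(norm (us n))\<^sup>2 + (norm (u n))\<^sup>2 \<le> (norm (w n))\<^sup>2" for n using sq1[of n] by simp
  have midD: "(1/2) *\<^sub>R (d1 + d2) \<in> closure Dset" if "d1 \<in> closure Dset" "d2 \<in> closure Dset" for d1 d2
    using mid_D[OF mA mB] that unfolding Dset_def by blast
  have midR: "(1/2) *\<^sub>R (d1 + d2) \<in> closure Rset" if "d1 \<in> closure Rset" "d2 \<in> closure Rset" for d1 d2
    using mid_R[OF mA mB] that unfolding Rset_def by blast
  have projR: "proj (closure Rset) 0 = 0 \<longleftrightarrow> 0 \<in> closure Rset"
    by (rule proj0_iff) (use winR midR in \<open>auto intro: closure_subset[THEN subsetD]\<close>)
  have projD: "proj (closure Dset) 0 = 0 \<longleftrightarrow> 0 \<in> closure Dset"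
    by (rule proj0_iff) (use winD midD in \<open>auto intro: closure_subset[THEN subsetD]\<close>)
  have lbS: "\<delta> \<le> norm z" if "z \<in> closure Dset" "z \<in> closure Rset" for z
    unfolding \<delta>_def by (rule closure_norm_lb) (use that hyp in blast)
  have part1: "u \<longlonglongrightarrow> 0 \<longleftrightarrow> 0 \<in> closure Rset"
  proof
    assume "u \<longlonglongrightarrow> 0"
    thus "0 \<in> closure Rset" using zero_in_closure_lim uinR by blast
  next
    assume z: "0 \<in> closure Rset"
    show "u \<longlonglongrightarrow> 0"
    proof (rule key_conv[OF wlim \<delta>0 sq1])
      fix n
      have m1: "(1/2) *\<^sub>R (us n + w (Suc n)) \<in> closure Dset"
        using midD closure_subset usinD winD by blast
      have "(1/2) *\<^sub>R ((us n + w (Suc n)) + 0) \<in> closure Rset"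
        using midR z closure_subset ex1R by blast
      hence m2: "(1/2) *\<^sub>R (us n + w (Suc n)) \<in> closure Rset" by simp
      have "2 * \<delta> \<le> 2 * norm ((1/2) *\<^sub>R (us n + w (Suc n)))" using lbS[OF m1 m2] by simp
      also have "\<dots> \<le> norm (us n) + norm (w (Suc n))" by (rule mid_norm)
      finally show "2 * \<delta> - norm (w (Suc n)) \<le> norm (us n)" by simp
    qed
  qed
  have part2: "us \<longlonglongrightarrow> 0 \<longleftrightarrow> 0 \<in> closure Dset"
  proof
    assume "us \<longlonglongrightarrow> 0"
    thus "0 \<in> closure Dset" using zero_in_closure_lim usinD by blast
  next
    assume z: "0 \<in> closure Dset"
    show "us \<longlonglongrightarrow> 0"
    proof (rule key_conv[OF wlim \<delta>0 sq2])
      fix n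
      have m1: "(1/2) *\<^sub>R (u n + w (Suc n)) \<in> closure Rset"
        using midR closure_subset uinR winR by blast
      have "(1/2) *\<^sub>R ((u n + w (Suc n)) + 0) \<in> closure Dset"
        using midD z closure_subset ex2D by blast
      hence m2: "(1/2) *\<^sub>R (u n + w (Suc n)) \<in> closure Dset" by simp
      have "2 * \<delta> \<le> 2 * norm ((1/2) *\<^sub>R (u n + w (Suc n)))" using lbS[OF m2 m1] by simp
      also have "\<dots> \<le> norm (u n) + norm (w (Suc n))" by (rule mid_norm)
      finally show "2 * \<delta> - norm (w (Suc n)) \<le> norm (u n)" by simp
    qed
  qed
  have ar1: "asymp_regular (\<lambda>n. resolvent A ((DR_op A B ^^ n) x)) \<longleftrightarrow> u \<longlonglongrightarrow> 0"
    unfolding asymp_regular_def u_def a_def y_def T_def ..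
  have inv: "resolvent (inv_op A) ((DR_op A B ^^ n) x) = as n" for n
    using resolvent_inv[OF mA] by (simp add: as_def a_def y_def T_def)
  have ar2: "asymp_regular (\<lambda>n. resolvent (inv_op A) ((DR_op A B ^^ n) x)) \<longleftrightarrow> us \<longlonglongrightarrow> 0"
    unfolding asymp_regular_def inv us_def ..
  show ?thesis
    using ar1 ar2 part1 part2 projR projD unfolding Rset_def Dset_def by simp
qed


end
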